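(* Let $f:\{0,1\}^{10}\to\{0,1\}$ be fully sensitive at $0$ with $d(f)\le 4$. Then the symmetrization polynomial of $f$ is \[ \tilde{p}(x) = -\frac{x^{4}}{144}+\frac{5 x^{3}}{36}-\frac{125 x^{2}}{144}+\frac{125 x}{72}. \]
   Context: $d(f)$ is the degree of the unique multilinear real polynomial $q$ agreeing with $f$ on $\{0,1\}^{10}$. $f$ is fully sensitive at $0$ if $f(0)=0$ and $f(e_i)=1$ for every unit vector $e_i$. The symmetrization polynomial of $f$ is the univariate real polynomial $p$ of degree at most $d(f)$ with $p(x_1+\dots+x_{10})=\frac{1}{10!}\sum_{\pi\in S_{10}} q(\pi(x))$ for all $x\in\{0,1\}^{10}$ ($\pi(x)$ permutes coordinates); equivalently $p(k)$ is the fraction of inputs of Hamming weight $k$ on which $f=1$, for $k=0,\dots,10$. *)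

theory Defs
  imports Main "HOL-Computational_Algebra.Polynomial"
begin

text \<open>A Boolean function on {0,1}^n is represented as f :: nat set => bool, where an input
  x is identified with its support {i < n. x_i = 1}; only subsets of {0..<n} matter.
  A multilinear real polynomial in x_0..x_(n-1) is represented by its coefficient function
  c :: nat set => real (coefficient of the monomial prod_(i in T) x_i); its value at the
  input with support S is sum_(T subseteq S) c T.\<close>

definition multilin_agrees :: "nat \<Rightarrow> (nat set \<Rightarrow> bool) \<Rightarrow> (nat set \<Rightarrow> real) \<Rightarrow> bool" where
  "multilin_agrees n f c \<longleftrightarrow>
     (\<forall>T. c T \<noteq> 0 \<longrightarrow> T \<subseteq> {0..<n}) \<and>
     (\<forall>S. S \<subseteq> {0..<n} \<longrightarrow> (if f S then 1 else 0) = (\<Sum>T\<in>Pow S. c T))"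

definition bdeg :: "nat \<Rightarrow> (nat set \<Rightarrow> bool) \<Rightarrow> nat" where
  "bdeg n f = (LEAST d. \<exists>c. multilin_agrees n f c \<and> (\<forall>T. c T \<noteq> 0 \<longrightarrow> card T \<le> d))"

definition fully_sensitive_at_0 :: "nat \<Rightarrow> (nat set \<Rightarrow> bool) \<Rightarrow> bool" where
  "fully_sensitive_at_0 n f \<longleftrightarrow> \<not> f {} \<and> (\<forall>i<n. f {i})"

definition is_symmetrization :: "nat \<Rightarrow> (nat set \<Rightarrow> bool) \<Rightarrow> real poly \<Rightarrow> bool" where
  "is_symmetrization n f p \<longleftrightarrow> degree p \<le> bdeg n f \<and>
     (\<forall>k\<le>n. poly p (real k) =
        real (card {S. S \<subseteq> {0..<n} \<and> card S = k \<and> f S}) / real (n choose k))"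

end

theory Submission
  imports Defs
begin

lemma supersets_card:
  assumes "finite N" "T \<subseteq> N" "card T \<le> k"
  shows "card {S. S \<subseteq> N \<and> card S = k \<and> T \<subseteq> S} = (card N - card T) choose (k - card T)"
proof -
  have fT: "finite T" using assms finite_subset by blast
  have eq: "{S. S \<subseteq> N \<and> card S = k \<and> T \<subseteq> S} = (\<lambda>U. U \<union> T) ` {U. U \<subseteq> N - T \<and> card U = k - card T}"
  proof (rule set_eqI, rule iffI)
    fix S assume "S \<in> {S. S \<subseteq> N \<and> card S = k \<and> T \<subseteq> S}"
    then have S: "S \<subseteq> N" "card S = k" "T \<subseteq> S" by auto
    have "card (S - T) = k - card T" using S fT by (simp add: card_Diff_subset)
    moreover have "S = (S - T) \<union> T" using S by auto
    moreover have "S - T \<subseteq> N - T" using S by auto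
    ultimately show "S \<in> (\<lambda>U. U \<union> T) ` {U. U \<subseteq> N - T \<and> card U = k - card T}"
      by (intro image_eqI[of _ _ "S - T"]) auto
  next
    fix S assume "S \<in> (\<lambda>U. U \<union> T) ` {U. U \<subseteq> N - T \<and> card U = k - card T}"
    then obtain U where U: "U \<subseteq> N - T" "card U = k - card T" "S = U \<union> T" by auto
    have fU: "finite U" using U(1) assms(1) finite_subset by blast
    have "U \<inter> T = {}" using U(1) by auto
    then have "card S = card U + card T" using U fT fU by (simp add: card_Un_disjoint)
    then show "S \<in> {S. S \<subseteq> N \<and> card S = k \<and> T \<subseteq> S}" using U assms by auto
  qed
  have inj: "inj_on (\<lambda>U. U \<union> T) {U. U \<subseteq> N - T \<and> card U = k - card T}"
    by (auto simp: inj_on_def)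
  have "card {S. S \<subseteq> N \<and> card S = k \<and> T \<subseteq> S} = card {U. U \<subseteq> N - T \<and> card U = k - card T}"
    unfolding eq by (rule card_image[OF inj])
  also have "\<dots> = card (N - T) choose (k - card T)"
    using n_subsets assms(1) by blast
  also have "card (N - T) = card N - card T" using assms fT by (simp add: card_Diff_subset)
  finally show ?thesis .
qed

lemma supersets_card0:
  assumes "finite N" "T \<subseteq> N" "\<not> card T \<le> k"
  shows "card {S. S \<subseteq> N \<and> card S = k \<and> T \<subseteq> S} = 0"
proof -
  have "{S. S \<subseteq> N \<and> card S = k \<and> T \<subseteq> S} = {}"
  proof (rule ccontr)
    assume "{S. S \<subseteq> N \<and> card S = k \<and> T \<subseteq> S} \<noteq> {}"
    then obtain S where "S \<subseteq> N" "card S = k" "T \<subseteq> S" by auto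
    then have "card T \<le> k" using assms(1) card_mono finite_subset by metis
    then show False using assms(3) by simp
  qed
  then show ?thesis by (metis card.empty)
qed

definition wt :: "nat \<Rightarrow> nat \<Rightarrow> nat \<Rightarrow> nat" where
  "wt n j k = (if j \<le> k then (n - j) choose (k - j) else 0)"

lemma count_formula:
  fixes c :: "nat set \<Rightarrow> real"
  assumes agree: "multilin_agrees n f c"
  shows "real (card {S. S \<subseteq> {0..<n} \<and> card S = k \<and> f S})
       = (\<Sum>T\<in>Pow {0..<n}. c T * real (wt n (card T) k))"
proof -
  let ?N = "{0..<n::nat}"
  let ?A = "{S. S \<subseteq> ?N \<and> card S = k}"
  have finA: "finite ?A" by (rule finite_subset[of _ "Pow ?N"]) auto
  have "{S. S \<subseteq> ?N \<and> card S = k \<and> f S} = {S\<in>?A. f S}" by auto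
  then have "real (card {S. S \<subseteq> ?N \<and> card S = k \<and> f S}) = (\<Sum>S\<in>{S\<in>?A. f S}. (1::real))"
    by simp
  also have "\<dots> = (\<Sum>S\<in>?A. if f S then 1 else 0)"
    using finA by (rule sum.inter_filter)
  also have "\<dots> = (\<Sum>S\<in>?A. \<Sum>T\<in>Pow S. c T)"
    by (rule sum.cong[OF refl]) (use agree in \<open>simp add: multilin_agrees_def\<close>)
  also have "\<dots> = (\<Sum>S\<in>?A. \<Sum>T\<in>Pow ?N. if T \<subseteq> S then c T else 0)"
  proof (rule sum.cong[OF refl])
    fix S assume "S \<in> ?A"
    then have "S \<subseteq> ?N" by auto
    then have e: "{T\<in>Pow ?N. T \<subseteq> S} = Pow S" by auto
    have "(\<Sum>T\<in>Pow ?N. if T \<subseteq> S then c T else 0) = sum c {T\<in>Pow ?N. T \<subseteq> S}"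
      by (rule sum.inter_filter[symmetric]) simp
    then show "(\<Sum>T\<in>Pow S. c T) = (\<Sum>T\<in>Pow ?N. if T \<subseteq> S then c T else 0)"
      unfolding e by simp
  qed
  also have "\<dots> = (\<Sum>T\<in>Pow ?N. \<Sum>S\<in>?A. if T \<subseteq> S then c T else 0)"
    by (rule sum.swap)
  also have "\<dots> = (\<Sum>T\<in>Pow ?N. c T * real (wt n (card T) k))"
  proof (rule sum.cong[OF refl])
    fix T assume T: "T \<in> Pow ?N"
    have "(\<Sum>S\<in>?A. if T \<subseteq> S then c T else 0) = (\<Sum>S\<in>{S\<in>?A. T \<subseteq> S}. c T)"
      using sum.inter_filter[OF finA, of "\<lambda>_. c T" "\<lambda>S. T \<subseteq> S"] by simp
    also have "\<dots> = c T * real (card {S\<in>?A. T \<subseteq> S})" by simp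
    also have "{S\<in>?A. T \<subseteq> S} = {S. S \<subseteq> ?N \<and> card S = k \<and> T \<subseteq> S}" by auto
    also have "card \<dots> = wt n (card T) k"
    proof (cases "card T \<le> k")
      case True
      then show ?thesis using supersets_card[of ?N T k] T by (simp add: wt_def)
    next
      case False
      then show ?thesis using supersets_card0[of ?N T k] T by (simp add: wt_def)
    qed
    finally show "(\<Sum>S\<in>?A. if T \<subseteq> S then c T else 0) = c T * real (wt n (card T) k)" .
  qed
  finally show ?thesis .
qed

definition cs :: "nat \<Rightarrow> (nat set \<Rightarrow> real) \<Rightarrow> nat \<Rightarrow> real" where
  "cs n c j = (\<Sum>T\<in>{T. T \<subseteq> {0..<n} \<and> card T = j}. c T)"

lemma group_formula:
  fixes c :: "nat set \<Rightarrow> real"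
  shows "(\<Sum>T\<in>Pow {0..<n}. c T * real (wt n (card T) k)) = (\<Sum>j\<le>n. cs n c j * real (wt n j k))"
proof -
  have sub: "card ` Pow {0..<n} \<subseteq> {..n}"
  proof
    fix x assume "x \<in> card ` Pow {0..<n}"
    then obtain T where T: "T \<subseteq> {0..<n}" "x = card T" by auto
    then have "card T \<le> card {0..<n}" by (intro card_mono) auto
    then show "x \<in> {..n}" using T by simp
  qed
  have "(\<Sum>T\<in>Pow {0..<n}. c T * real (wt n (card T) k))
     = (\<Sum>j\<in>{..n}. \<Sum>T\<in>{T\<in>Pow {0..<n}. card T = j}. c T * real (wt n (card T) k))"
    by (rule sum.group[symmetric, OF _ _ sub]) auto
  also have "\<dots> = (\<Sum>j\<le>n. cs n c j * real (wt n j k))"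
  proof (rule sum.cong[OF refl])
    fix j assume "j \<in> {..n}"
    have e: "{T\<in>Pow {0..<n}. card T = j} = {T. T \<subseteq> {0..<n} \<and> card T = j}" by auto
    show "(\<Sum>T\<in>{T\<in>Pow {0..<n}. card T = j}. c T * real (wt n (card T) k)) = cs n c j * real (wt n j k)"
      unfolding e cs_def sum_distrib_right by (rule sum.cong[OF refl]) simp
  qed
  finally show ?thesis .
qed

lemma wt_table:
  "wt 10 0 0 = 1"
  "wt 10 0 1 = 10"
  "wt 10 0 2 = 45"
  "wt 10 0 3 = 120"
  "wt 10 0 4 = 210"
  "wt 10 0 5 = 252"
  "wt 10 0 6 = 210"
  "wt 10 0 7 = 120"
  "wt 10 0 8 = 45"
  "wt 10 0 9 = 10"
  "wt 10 0 10 = 1"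
  "wt 10 1 0 = 0"
  "wt 10 1 1 = 1"
  "wt 10 1 2 = 9"
  "wt 10 1 3 = 36"
  "wt 10 1 4 = 84"
  "wt 10 1 5 = 126"
  "wt 10 1 6 = 126"
  "wt 10 1 7 = 84"
  "wt 10 1 8 = 36"
  "wt 10 1 9 = 9"
  "wt 10 1 10 = 1"
  "wt 10 2 0 = 0"
  "wt 10 2 1 = 0"
  "wt 10 2 2 = 1"
  "wt 10 2 3 = 8"
  "wt 10 2 4 = 28"
  "wt 10 2 5 = 56"
  "wt 10 2 6 = 70"
  "wt 10 2 7 = 56"
  "wt 10 2 8 = 28"
  "wt 10 2 9 = 8"
  "wt 10 2 10 = 1"
  "wt 10 3 0 = 0"
  "wt 10 3 1 = 0"
  "wt 10 3 2 = 0"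
  "wt 10 3 3 = 1"
  "wt 10 3 4 = 7"
  "wt 10 3 5 = 21"
  "wt 10 3 6 = 35"
  "wt 10 3 7 = 35"
  "wt 10 3 8 = 21"
  "wt 10 3 9 = 7"
  "wt 10 3 10 = 1"
  "wt 10 4 0 = 0"
  "wt 10 4 1 = 0"
  "wt 10 4 2 = 0"
  "wt 10 4 3 = 0"
  "wt 10 4 4 = 1"
  "wt 10 4 5 = 6"
  "wt 10 4 6 = 15"
  "wt 10 4 7 = 20"
  "wt 10 4 8 = 15"
  "wt 10 4 9 = 6"
  "wt 10 4 10 = 1"
  by (simp_all add: wt_def eval_nat_numeral)

definition Ncount :: "(nat set \<Rightarrow> bool) \<Rightarrow> nat \<Rightarrow> real" where
  "Ncount f k = real (card {S. S \<subseteq> {0..<10::nat} \<and> card S = k \<and> f S})"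

lemma NF:
  fixes c :: "nat set \<Rightarrow> real"
  assumes agree: "multilin_agrees 10 f c" and deg: "\<forall>T. c T \<noteq> 0 \<longrightarrow> card T \<le> 4"
  shows "Ncount f k = cs 10 c 0 * real (wt 10 0 k) + cs 10 c 1 * real (wt 10 1 k)
     + cs 10 c 2 * real (wt 10 2 k) + cs 10 c 3 * real (wt 10 3 k) + cs 10 c 4 * real (wt 10 4 k)"
proof -
  have z: "cs 10 c j = 0" if "j > 4" for j
    unfolding cs_def using deg that by (intro sum.neutral) auto
  have "Ncount f k = (\<Sum>j\<le>10. cs 10 c j * real (wt 10 j k))"
    unfolding Ncount_def using count_formula[OF agree, of k] group_formula[where n=10 and c=c and k=k] by simp
  also have "\<dots> = (\<Sum>j\<le>4. cs 10 c j * real (wt 10 j k))"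
    by (rule sum.mono_neutral_right) (auto simp: z)
  also have "\<dots> = cs 10 c 0 * real (wt 10 0 k) + cs 10 c 1 * real (wt 10 1 k)
     + cs 10 c 2 * real (wt 10 2 k) + cs 10 c 3 * real (wt 10 3 k) + cs 10 c 4 * real (wt 10 4 k)"
    by (simp add: eval_nat_numeral atMost_Suc add_ac)
  finally show ?thesis .
qed

lemma N_ub: "Ncount f k \<le> real (10 choose k)"
proof -
  have "card {S. S \<subseteq> {0..<10::nat} \<and> card S = k \<and> f S} \<le> card {S. S \<subseteq> {0..<10::nat} \<and> card S = k}"
    by (rule card_mono) (auto intro: finite_subset[of _ "Pow {0..<10}"])
  also have "\<dots> = 10 choose k" using n_subsets[of "{0..<10::nat}" k] by simp
  finally show ?thesis unfolding Ncount_def by simp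
qed

lemma N_lb: "0 \<le> Ncount f k" unfolding Ncount_def by simp

lemma N0: assumes "fully_sensitive_at_0 10 f" shows "Ncount f 0 = 0"
proof -
  have "{S. S \<subseteq> {0..<10::nat} \<and> card S = 0 \<and> f S} = {}"
    using assms by (auto simp: fully_sensitive_at_0_def dest: finite_subset)
  then show ?thesis unfolding Ncount_def by simp
qed

lemma N1: assumes "fully_sensitive_at_0 10 f" shows "Ncount f 1 = 10"
proof -
  have "{S. S \<subseteq> {0..<10::nat} \<and> card S = 1 \<and> f S} = {S. S \<subseteq> {0..<10::nat} \<and> card S = 1}"
    using assms by (auto simp: fully_sensitive_at_0_def card_1_singleton_iff)
  moreover have "card {S. S \<subseteq> {0..<10::nat} \<and> card S = 1} = 10"
    using n_subsets[of "{0..<10::nat}" 1] by simp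
  ultimately show ?thesis unfolding Ncount_def by simp
qed

lemma key:
  fixes c :: "nat set \<Rightarrow> real"
  assumes fs: "fully_sensitive_at_0 10 f"
    and agree: "multilin_agrees 10 f c" and deg: "\<forall>T. c T \<noteq> 0 \<longrightarrow> card T \<le> 4"
  shows "cs 10 c 0 = 0 \<and> cs 10 c 1 = 10 \<and> cs 10 c 2 = -45 \<and> cs 10 c 3 = 70 \<and> cs 10 c 4 = -35"
proof -
  note E = NF[OF agree deg]
  have b: "0 \<le> Ncount f k" "Ncount f k \<le> real (10 choose k)" for k
    using N_lb N_ub by auto
  have c2: "(10::nat) choose 2 = 45" "(10::nat) choose 3 = 120" "(10::nat) choose 4 = 210"
    "(10::nat) choose 5 = 252" "(10::nat) choose 6 = 210" "(10::nat) choose 7 = 120"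
    "(10::nat) choose 8 = 45" "(10::nat) choose 9 = 10" "(10::nat) choose 10 = 1"
    by (simp_all add: eval_nat_numeral)
  have e0: "Ncount f 0 = 0" by (rule N0[OF fs])
  have e1: "Ncount f 1 = 10" by (rule N1[OF fs])
  have s0: "cs 10 c 0 = 0" using E[of 0, unfolded wt_table] e0 by simp
  have s1: "cs 10 c 1 = 10" using E[of 1, unfolded wt_table] e1 s0 by simp
  have F2: "0 \<le> cs 10 c 0 * 45 + cs 10 c 1 * 9 + cs 10 c 2 * 1" "cs 10 c 0 * 45 + cs 10 c 1 * 9 + cs 10 c 2 * 1 \<le> 45"
    using E[of 2, unfolded wt_table] b[of 2] c2 by simp_all
  have F3: "0 \<le> cs 10 c 0 * 120 + cs 10 c 1 * 36 + cs 10 c 2 * 8 + cs 10 c 3 * 1" "cs 10 c 0 * 120 + cs 10 c 1 * 36 + cs 10 c 2 * 8 + cs 10 c 3 * 1 \<le> 120"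
    using E[of 3, unfolded wt_table] b[of 3] c2 by simp_all
  have F4: "0 \<le> cs 10 c 0 * 210 + cs 10 c 1 * 84 + cs 10 c 2 * 28 + cs 10 c 3 * 7 + cs 10 c 4 * 1" "cs 10 c 0 * 210 + cs 10 c 1 * 84 + cs 10 c 2 * 28 + cs 10 c 3 * 7 + cs 10 c 4 * 1 \<le> 210"
    using E[of 4, unfolded wt_table] b[of 4] c2 by simp_all
  have F5: "0 \<le> cs 10 c 0 * 252 + cs 10 c 1 * 126 + cs 10 c 2 * 56 + cs 10 c 3 * 21 + cs 10 c 4 * 6" "cs 10 c 0 * 252 + cs 10 c 1 * 126 + cs 10 c 2 * 56 + cs 10 c 3 * 21 + cs 10 c 4 * 6 \<le> 252"
    using E[of 5, unfolded wt_table] b[of 5] c2 by simp_all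
  have F6: "0 \<le> cs 10 c 0 * 210 + cs 10 c 1 * 126 + cs 10 c 2 * 70 + cs 10 c 3 * 35 + cs 10 c 4 * 15" "cs 10 c 0 * 210 + cs 10 c 1 * 126 + cs 10 c 2 * 70 + cs 10 c 3 * 35 + cs 10 c 4 * 15 \<le> 210"
    using E[of 6, unfolded wt_table] b[of 6] c2 by simp_all
  have F7: "0 \<le> cs 10 c 0 * 120 + cs 10 c 1 * 84 + cs 10 c 2 * 56 + cs 10 c 3 * 35 + cs 10 c 4 * 20" "cs 10 c 0 * 120 + cs 10 c 1 * 84 + cs 10 c 2 * 56 + cs 10 c 3 * 35 + cs 10 c 4 * 20 \<le> 120"
    using E[of 7, unfolded wt_table] b[of 7] c2 by simp_all
  have F8: "0 \<le> cs 10 c 0 * 45 + cs 10 c 1 * 36 + cs 10 c 2 * 28 + cs 10 c 3 * 21 + cs 10 c 4 * 15" "cs 10 c 0 * 45 + cs 10 c 1 * 36 + cs 10 c 2 * 28 + cs 10 c 3 * 21 + cs 10 c 4 * 15 \<le> 45"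
    using E[of 8, unfolded wt_table] b[of 8] c2 by simp_all
  have F9: "0 \<le> cs 10 c 0 * 10 + cs 10 c 1 * 9 + cs 10 c 2 * 8 + cs 10 c 3 * 7 + cs 10 c 4 * 6" "cs 10 c 0 * 10 + cs 10 c 1 * 9 + cs 10 c 2 * 8 + cs 10 c 3 * 7 + cs 10 c 4 * 6 \<le> 10"
    using E[of 9, unfolded wt_table] b[of 9] c2 by simp_all
  have F10: "0 \<le> cs 10 c 0 * 1 + cs 10 c 1 * 1 + cs 10 c 2 * 1 + cs 10 c 3 * 1 + cs 10 c 4 * 1" "cs 10 c 0 * 1 + cs 10 c 1 * 1 + cs 10 c 2 * 1 + cs 10 c 3 * 1 + cs 10 c 4 * 1 \<le> 1"
    using E[of 10, unfolded wt_table] b[of 10] c2 by simp_all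
  show ?thesis using s0 s1 F2 F3 F4 F5 F6 F7 F8 F9 F10 by linarith
qed


lemma exists_rep: "\<exists>c. multilin_agrees n f c"
proof -
  define F where "F S = (if f S then 1 else 0::real)" for S
  define g where "g S = (\<Sum>T\<in>Pow S. (-1)^card T * F T)" for S
  have inv: "F S = (\<Sum>T\<in>Pow S. (-1)^card T * g T)" if "finite S" for S
    using inclusion_exclusion_symmetric[of g F S] g_def that by simp
  define c where "c T = (if T \<subseteq> {0..<n} then (-1)^card T * g T else 0)" for T
  have "multilin_agrees n f c"
    unfolding multilin_agrees_def
  proof (intro conjI allI impI)
    fix T assume "c T \<noteq> 0" then show "T \<subseteq> {0..<n}" unfolding c_def by (simp split: if_splits)
  next
    fix S :: "nat set" assume S: "S \<subseteq> {0..<n}"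
    then have "finite S" using finite_subset by blast
    then have "F S = (\<Sum>T\<in>Pow S. (-1)^card T * g T)" by (rule inv)
    also have "\<dots> = (\<Sum>T\<in>Pow S. c T)"
      by (rule sum.cong[OF refl]) (use S in \<open>auto simp: c_def\<close>)
    finally show "(if f S then 1 else 0) = (\<Sum>T\<in>Pow S. c T)" unfolding F_def .
  qed
  then show ?thesis by blast
qed

theorem theorem11:
  fixes f :: "nat set \<Rightarrow> bool"
  assumes "fully_sensitive_at_0 10 f"
    and "bdeg 10 f \<le> 4"
  shows "is_symmetrization 10 f [:0, 125/72, -125/144, 5/36, -1/144:]"
proof -
  note fs = assms(1)
  obtain c0 where c0: "multilin_agrees 10 f c0" using exists_rep by blast
  have ex: "\<exists>d c. multilin_agrees 10 f c \<and> (\<forall>T. c T \<noteq> 0 \<longrightarrow> card T \<le> d)"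
  proof (intro exI conjI)
    show "multilin_agrees 10 f c0" by (rule c0)
    show "\<forall>T. c0 T \<noteq> 0 \<longrightarrow> card T \<le> 10"
    proof (intro allI impI)
      fix T assume "c0 T \<noteq> 0"
      then have "T \<subseteq> {0..<10}" using c0 unfolding multilin_agrees_def by blast
      then have "card T \<le> card {0..<10::nat}" by (intro card_mono) auto
      then show "card T \<le> 10" by simp
    qed
  qed
  obtain c where c: "multilin_agrees 10 f c" "\<forall>T. c T \<noteq> 0 \<longrightarrow> card T \<le> bdeg 10 f"
    using LeastI_ex[OF ex] unfolding bdeg_def by blast
  have deg: "\<forall>T. c T \<noteq> 0 \<longrightarrow> card T \<le> 4" using c(2) assms(2) by fastforce
  have K: "cs 10 c 0 = 0 \<and> cs 10 c 1 = 10 \<and> cs 10 c 2 = -45 \<and> cs 10 c 3 = 70 \<and> cs 10 c 4 = -35"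
    by (rule key[OF fs c(1) deg])
  have b4: "bdeg 10 f \<ge> 4"
  proof (rule ccontr)
    assume "\<not> 4 \<le> bdeg 10 f"
    then have "cs 10 c 4 = 0" unfolding cs_def using c(2) by (intro sum.neutral) fastforce
    then show False using K by simp
  qed
  have N: "Ncount f k = cs 10 c 0 * real (wt 10 0 k) + cs 10 c 1 * real (wt 10 1 k)
     + cs 10 c 2 * real (wt 10 2 k) + cs 10 c 3 * real (wt 10 3 k) + cs 10 c 4 * real (wt 10 4 k)" for k
    by (rule NF[OF c(1) deg])
  have vals: "poly [:0, 125/72, -125/144, 5/36, -1/144:] (real k) = Ncount f k / real (10 choose k)"
    if "k \<le> 10" for k
  proof -
    have "k = 0 \<or> k = 1 \<or> k = 2 \<or> k = 3 \<or> k = 4 \<or> k = 5 \<or> k = 6 \<or> k = 7 \<or> k = 8 \<or> k = 9 \<or> k = 10"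
      using that by presburger
    then show ?thesis
      by (elim disjE; simp only: N wt_table K; simp add: eval_nat_numeral)
  qed
  show ?thesis
    unfolding is_symmetrization_def
  proof (intro conjI allI impI)
    show "degree [:0, 125/72, -125/144, 5/36, -1/144:] \<le> bdeg 10 f" using b4 by simp
  next
    fix k :: nat assume "k \<le> 10"
    then show "poly [:0, 125/72, -125/144, 5/36, -1/144:] (real k) =
        real (card {S. S \<subseteq> {0..<10} \<and> card S = k \<and> f S}) / real (10 choose k)"
      using vals unfolding Ncount_def by simp
  qed
qed

end
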